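(* Assume the setting below (missing at random). Fix $\boldsymbol\delta\in\mathbb R^n$, let $\mathcal S=\{i:M_i=1\}$, $n_{\mathcal S1}=\sum_{i\in\mathcal S}Z_i$ and $n_{\mathcal S0}=|\mathcal S|-n_{\mathcal S1}$. For $\boldsymbol z\in\{0,1\}^n$, $\boldsymbol y\in\overline{\mathbb R}^n$ let $t_{\mathrm R,\phi,\mathcal S}(\boldsymbol z,\boldsymbol y)=t_{\mathrm R,\phi}(\boldsymbol z_{\mathcal S},\boldsymbol y_{\mathcal S})$, the statistic computed on the subvectors indexed by $\mathcal S$ (original index order kept), and let $G_{\mathrm R,\phi,\mathcal S}(c)=\mathbb P(t_{\mathrm R,\phi,\mathcal S}(\boldsymbol A,\boldsymbol y_0)\ge c)$, where $\boldsymbol A_{\mathcal S}$ is uniform over assignments of the units in $\mathcal S$ with exactly $n_{\mathcal S1}$ treated (with $\mathcal S,n_{\mathcal S1}$ held fixed) and $\boldsymbol y_0\in\mathbb R^n$ is any fixed vector. Then $$p_{\boldsymbol Z,\boldsymbol\delta,\mathcal S}=G_{\mathrm R,\phi,\mathcal S}\big(t_{\mathrm R,\phi,\mathcal S}(\boldsymbol Z,\boldsymbol Y-\boldsymbol\delta\circ\boldsymbol Z)\big)$$ (which only uses the observed outcomes $Y_i$, $i\in\mathcal S$) is a valid p-value for $H_{\boldsymbol\delta}:\boldsymbol\tau=\boldsymbol\delta$: if $H_{\boldsymbol\delta}$ holds, $\mathbb P(p_{\boldsymbol Z,\boldsymbol\delta,\mathcal S}\le\alpha)\le\alpha$ for every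 $\alpha\in(0,1)$.
   Context: There are $n$ units with fixed potential outcomes $Y_i^\star(0),Y_i^\star(1)\in\mathbb R$; $\tau_i=Y_i^\star(1)-Y_i^\star(0)$, $\boldsymbol\tau=(\tau_1,\dots,\tau_n)^\intercal$. Missing at random: the potential missingness pairs $(M_i(1),M_i(0))\in\{0,1\}^2$, $1\le i\le n$, are random, i.i.d. across $i$, with $\mathbb P((M_i(1),M_i(0))=(m,m'))=p_{mm'}$ for constants $p_{11},p_{10},p_{01},p_{00}\ge0$ summing to 1 that do not depend on the potential outcomes (conditionally on the potential outcomes). The assignment $\boldsymbol Z\in\{0,1\}^n$ is from a completely randomized experiment: for fixed positive integers $n_1,n_0$ with $n_1+n_0=n$, $\boldsymbol Z$ is uniform over vectors with exactly $n_1$ ones, independently of the potential outcomes and potential missingness indicators. Observed missingness $M_i=Z_iM_i(1)+(1-Z_i)M_i(0)$; the realized outcome $Z_iY_i^\star(1)+(1-Z_i)Y_i^\star(0)$ is observed, and denoted $Y_i$, only when $M_i=1$. $\circ$ is the entrywise product. $\overline{\mathbb R}=\mathbb R\cup\{\pm\infty\}$; $\psi_{i,j}(y,y')=\mathbf 1\{y>y'\}+\mathbf 1\{y=y'\}\mathbf 1\{i\ge j\}$; $\mathrm{rank}_i(\boldsymbol y)=\sum_j\psi_{i,j}(y_i,y_j)$. $\phi$ is a fixed nondecreasing real function on the nonnegative integers. $t_{\mathrm R,\phi}(\boldsymbol z,\boldsymbol y)$ is either $\sum_i z_i\phi(\mathrm{rank}_i(\boldsymbol y))$ or $\sum_i z_i\phi\big(\sum_j(1-z_j)\psi_{i,j}(y_i,y_j)\big)$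 (sums over the units of the given vectors); the result holds for either. *)

theory Defs
  imports "HOL-Probability.Probability"
begin

(* Units are indexed 0..<n. An assignment / treated set is a set of indices (Z_i = 1 iff i in set). *)

definition psi :: "nat \<Rightarrow> nat \<Rightarrow> real \<Rightarrow> real \<Rightarrow> nat" where
  "psi i j y y' = of_bool (y > y') + of_bool (y = y') * of_bool (i \<ge> j)"

definition tRS1 :: "(nat \<Rightarrow> real) \<Rightarrow> nat set \<Rightarrow> nat set \<Rightarrow> (nat \<Rightarrow> real) \<Rightarrow> real" where
  "tRS1 phi S z y = (\<Sum>i\<in>S. of_bool (i \<in> z) * phi (\<Sum>j\<in>S. psi i j (y i) (y j)))"

definition tRS2 :: "(nat \<Rightarrow> real) \<Rightarrow> nat set \<Rightarrow> nat set \<Rightarrow> (nat \<Rightarrow> real) \<Rightarrow> real" where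
  "tRS2 phi S z y = (\<Sum>i\<in>S. of_bool (i \<in> z) * phi (\<Sum>j\<in>S. of_bool (j \<notin> z) * psi i j (y i) (y j)))"

definition assignments :: "nat set \<Rightarrow> nat \<Rightarrow> nat set set" where
  "assignments S m = {A. A \<subseteq> S \<and> card A = m}"

definition G :: "(nat set \<Rightarrow> nat set \<Rightarrow> (nat \<Rightarrow> real) \<Rightarrow> real) \<Rightarrow> (nat \<Rightarrow> real)
                 \<Rightarrow> nat set \<Rightarrow> nat \<Rightarrow> real \<Rightarrow> real" where
  "G stat y0 S m c = measure_pmf.prob (pmf_of_set (assignments S m)) {A. stat S A y0 \<ge> c}"

(* observed missingness indicator M_i = Z_i M_i(1) + (1-Z_i) M_i(0); MM i = (M_i(1), M_i(0)) *)
definition obsM :: "nat set \<Rightarrow> (nat \<Rightarrow> bool \<times> bool) \<Rightarrow> nat \<Rightarrow> bool" where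
  "obsM T MM i = (if i \<in> T then fst (MM i) else snd (MM i))"

definition obsY :: "nat set \<Rightarrow> (nat \<Rightarrow> real) \<Rightarrow> (nat \<Rightarrow> real) \<Rightarrow> nat \<Rightarrow> real" where
  "obsY T Y1 Y0 i = (if i \<in> T then Y1 i else Y0 i)"

definition pval :: "(nat set \<Rightarrow> nat set \<Rightarrow> (nat \<Rightarrow> real) \<Rightarrow> real) \<Rightarrow> (nat \<Rightarrow> real) \<Rightarrow> nat
     \<Rightarrow> (nat \<Rightarrow> real) \<Rightarrow> (nat \<Rightarrow> real) \<Rightarrow> (nat \<Rightarrow> real) \<Rightarrow> nat set \<Rightarrow> (nat \<Rightarrow> bool \<times> bool) \<Rightarrow> real" where
  "pval stat y0 n Y1 Y0 delta T MM =
     (let S = {i. i < n \<and> obsM T MM i}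
      in G stat y0 S (card (S \<inter> T))
           (stat S T (\<lambda>i. obsY T Y1 Y0 i - delta i * of_bool (i \<in> T))))"

end

theory Submission
  imports Defs
begin


definition lek :: "(nat \<Rightarrow> real) \<Rightarrow> nat \<Rightarrow> nat \<Rightarrow> bool" where
  "lek y i j \<longleftrightarrow> y i < y j \<or> (y i = y j \<and> i \<le> j)"

lemma psi_lek: "psi i j (y i) (y j) = of_bool (lek y j i)"
  unfolding psi_def lek_def by auto

definition rk :: "(nat \<Rightarrow> real) \<Rightarrow> nat set \<Rightarrow> nat \<Rightarrow> nat" where
  "rk y s i = card {j\<in>s. lek y j i}"

lemma lek_trans: "lek y i j \<Longrightarrow> lek y j k \<Longrightarrow> lek y i k"
  unfolding lek_def by auto
lemma lek_antisym: "lek y i j \<Longrightarrow> lek y j i \<Longrightarrow> i = j"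
  unfolding lek_def by auto
lemma lek_total: "lek y i j \<or> lek y j i"
  unfolding lek_def by auto
lemma lek_refl: "lek y i i"
  unfolding lek_def by auto

lemma rk_strict:
  assumes "finite s" "i \<in> s" "i' \<in> s" "lek y i i'" "i \<noteq> i'"
  shows "rk y s i < rk y s i'"
proof -
  have "{j\<in>s. lek y j i} \<subset> {j\<in>s. lek y j i'}"
  proof
    show "{j\<in>s. lek y j i} \<subseteq> {j\<in>s. lek y j i'}" using assms lek_trans by blast
    have "i' \<notin> {j\<in>s. lek y j i}" using assms lek_antisym by blast
    moreover have "i' \<in> {j\<in>s. lek y j i'}" using assms lek_refl by blast
    ultimately show "{j\<in>s. lek y j i} \<noteq> {j\<in>s. lek y j i'}" by blast
  qed
  then show ?thesis unfolding rk_def using assms by (intro psubset_card_mono) auto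
qed

lemma rk_iff:
  assumes "finite s" "i \<in> s" "j \<in> s"
  shows "lek y j i \<longleftrightarrow> rk y s j \<le> rk y s i"
proof
  assume l: "lek y j i" show "rk y s j \<le> rk y s i"
  proof (cases "i = j")
    case False then show ?thesis using rk_strict[OF assms(1,3,2) l] by simp
  qed simp
next
  assume a: "rk y s j \<le> rk y s i"
  show "lek y j i"
  proof (rule ccontr)
    assume "\<not> lek y j i"
    then have "lek y i j" "i \<noteq> j" using lek_total lek_refl by metis+
    then have "rk y s i < rk y s j" using rk_strict[OF assms] by auto
    with a show False by simp
  qed
qed

lemma rk_inj: "finite s \<Longrightarrow> inj_on (rk y s) s"
proof (rule inj_onI)
  fix i j assume f: "finite s" and ij: "i \<in> s" "j \<in> s" "rk y s i = rk y s j"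
  have "lek y j i" using rk_iff[OF f ij(1,2)] ij(3) by simp
  moreover have "lek y i j" using rk_iff[OF f ij(2,1)] ij(3) by simp
  ultimately show "i = j" using lek_antisym by blast
qed

lemma rk_range: "finite s \<Longrightarrow> i \<in> s \<Longrightarrow> rk y s i \<in> {1..card s}"
proof -
  assume "finite s" "i \<in> s"
  then have "i \<in> {j\<in>s. lek y j i}" using lek_refl by auto
  then have "card {j\<in>s. lek y j i} \<ge> 1" using \<open>finite s\<close>
    by (metis (no_types, lifting) One_nat_def Suc_leI card_gt_0_iff empty_iff finite_subset mem_Collect_eq subsetI)
  moreover have "card {j\<in>s. lek y j i} \<le> card s" using \<open>finite s\<close> by (intro card_mono) auto
  ultimately show ?thesis unfolding rk_def by auto
qed

lemma rk_bij: "finite s \<Longrightarrow> bij_betw (rk y s) s {1..card s}"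
proof -
  assume f: "finite s"
  have "rk y s ` s \<subseteq> {1..card s}" using rk_range[OF f] by auto
  moreover have "card (rk y s ` s) = card {1..card s}" using card_image[OF rk_inj[OF f]] by simp
  ultimately have "rk y s ` s = {1..card s}" by (intro card_subset_eq) auto
  then show ?thesis using rk_inj[OF f] unfolding bij_betw_def by simp
qed

lemma exists_iso:
  assumes "finite s"
  shows "\<exists>h. bij_betw h s s \<and> (\<forall>i\<in>s. \<forall>j\<in>s. lek y j i \<longleftrightarrow> lek y' (h j) (h i))"
proof -
  define h where "h = inv_into s (rk y' s) \<circ> rk y s"
  have b1: "bij_betw (rk y s) s {1..card s}" and b2: "bij_betw (rk y' s) s {1..card s}"
    using rk_bij[OF assms] by auto
  have bh: "bij_betw h s s" unfolding h_def
    using b1 bij_betw_inv_into[OF b2] bij_betw_trans by blast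
  have rh: "rk y' s (h i) = rk y s i" if "i \<in> s" for i
  proof -
    have "rk y s i \<in> rk y' s ` s" using b1 b2 that bij_betwE bij_betw_imp_surj_on by metis
    then show ?thesis unfolding h_def by (simp add: f_inv_into_f)
  qed
  have "\<forall>i\<in>s. \<forall>j\<in>s. lek y j i \<longleftrightarrow> lek y' (h j) (h i)"
  proof (intro ballI)
    fix i j assume ij: "i \<in> s" "j \<in> s"
    have hs: "h i \<in> s" "h j \<in> s" using bh ij bij_betwE by blast+
    show "lek y j i \<longleftrightarrow> lek y' (h j) (h i)"
      using rk_iff[OF assms ij] rk_iff[OF assms hs] rh ij by simp
  qed
  with bh show ?thesis by blast
qed

lemma stat_iso:
  assumes "finite s" "bij_betw h s s" "\<forall>i\<in>s. \<forall>j\<in>s. lek y j i \<longleftrightarrow> lek y' (h j) (h i)"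
    and "A \<subseteq> s" and "stat = tRS1 phi \<or> stat = tRS2 phi"
  shows "stat s A y = stat s (h ` A) y'"
proof -
  have inj: "inj_on h s" using assms(2) bij_betw_imp_inj_on by blast
  have memA: "h i \<in> h ` A \<longleftrightarrow> i \<in> A" if "i \<in> s" for i
    using inj that assms(4) by (auto dest: inj_onD)
  have ps: "psi (h i) (h j) (y' (h i)) (y' (h j)) = psi i j (y i) (y j)" if "i\<in>s" "j\<in>s" for i j
    using assms(3) that by (simp add: psi_lek)
  have r: "(\<Sum>x\<in>s. g (h x)) = sum g s" for g :: "nat \<Rightarrow> real"
    using sum.reindex_bij_betw[OF assms(2)] by blast
  have rn: "(\<Sum>x\<in>s. g (h x)) = sum g s" for g :: "nat \<Rightarrow> nat"
    using sum.reindex_bij_betw[OF assms(2)] by blast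
  show ?thesis
    using assms(5)
  proof
    assume st: "stat = tRS1 phi"
    have "tRS1 phi s (h ` A) y' = (\<Sum>i\<in>s. of_bool (h i \<in> h ` A) * phi (\<Sum>j\<in>s. psi (h i) (h j) (y' (h i)) (y' (h j))))"
      unfolding tRS1_def by (subst r[symmetric]) (simp add: rn[symmetric, where g = "\<lambda>j. psi (h _) j (y' (h _)) (y' j)"])
    also have "\<dots> = tRS1 phi s A y" unfolding tRS1_def
      by (intro sum.cong refl) (simp add: memA ps cong: sum.cong)
    finally show ?thesis using st by simp
  next
    assume st: "stat = tRS2 phi"
    have "tRS2 phi s (h ` A) y' = (\<Sum>i\<in>s. of_bool (h i \<in> h ` A) * phi (\<Sum>j\<in>s. of_bool (h j \<notin> h ` A) * psi (h i) (h j) (y' (h i)) (y' (h j))))"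
      unfolding tRS2_def by (subst r[symmetric]) (simp add: rn[symmetric, where g = "\<lambda>j. of_bool (j \<notin> h ` A) * psi (h _) j (y' (h _)) (y' j)"])
    also have "\<dots> = tRS2 phi s A y" unfolding tRS2_def
      by (intro sum.cong refl) (simp add: memA ps cong: sum.cong)
    finally show ?thesis using st by simp
  qed
qed



lemma count_bound:
  fixes f :: "'a \<Rightarrow> real"
  assumes "finite X" "X \<noteq> {}" "0 \<le> alpha"
  shows "real (card {a\<in>X. real (card {b\<in>X. f a \<le> f b}) / real (card X) \<le> alpha}) \<le> alpha * real (card X)"
proof (cases "{a\<in>X. real (card {b\<in>X. f a \<le> f b}) / real (card X) \<le> alpha} = {}")
  case True show ?thesis unfolding True using assms by simp
next
  case False
  define Y where "Y = {a\<in>X. real (card {b\<in>X. f a \<le> f b}) / real (card X) \<le> alpha}"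
  have fY: "finite Y" using assms unfolding Y_def by simp
  have nY: "Y \<noteq> {}" using False unfolding Y_def by simp
  have "Min (f ` Y) \<in> f ` Y" using fY nY by (intro Min_in) auto
  then obtain a0 where a0': "a0 \<in> Y" "f a0 = Min (f ` Y)" by auto
  have a0: "a0 \<in> Y" "\<forall>a\<in>Y. f a0 \<le> f a" using a0' fY by auto
  have cX: "real (card X) > 0" using assms by (simp add: card_gt_0_iff)
  have "Y \<subseteq> {b\<in>X. f a0 \<le> f b}" using a0 unfolding Y_def by auto
  then have "card Y \<le> card {b\<in>X. f a0 \<le> f b}" using assms by (intro card_mono) auto
  moreover have "real (card {b\<in>X. f a0 \<le> f b}) \<le> alpha * real (card X)"
    using a0(1) cX unfolding Y_def by (simp add: divide_le_eq)
  ultimately show ?thesis unfolding Y_def[symmetric] by linarith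
qed

lemma block_bound:
  fixes R :: "'a pmf" and I :: "'i set" and B :: "'i \<Rightarrow> 'a set"
  assumes fI: "finite I" and fB: "\<And>i. i\<in>I \<Longrightarrow> finite (B i)"
    and dj: "disjoint_family_on B I" and sp: "set_pmf R \<subseteq> (\<Union>i\<in>I. B i)"
    and cst: "\<And>i x y. i\<in>I \<Longrightarrow> x\<in>B i \<Longrightarrow> y\<in>B i \<Longrightarrow> pmf R x = pmf R y"
    and cb: "\<And>i. i\<in>I \<Longrightarrow> real (card (B i \<inter> E)) \<le> alpha * real (card (B i))"
    and a0: "alpha \<ge> 0"
  shows "measure_pmf.prob R E \<le> alpha"
proof -
  define U where "U = (\<Union>i\<in>I. B i)"
  have fU: "finite U" unfolding U_def using fI fB by auto
  have "measure_pmf.prob R E = measure_pmf.prob R (E \<inter> set_pmf R)"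
    by (simp add: measure_Int_set_pmf)
  also have "\<dots> \<le> measure_pmf.prob R (E \<inter> U)"
    using sp unfolding U_def by (intro measure_pmf.finite_measure_mono) auto
  also have "\<dots> = sum (pmf R) (E \<inter> U)" using fU by (simp add: measure_measure_pmf_finite)
  also have "E \<inter> U = (\<Union>i\<in>I. B i \<inter> E)" unfolding U_def by auto
  also have "sum (pmf R) (\<Union>i\<in>I. B i \<inter> E) = (\<Sum>i\<in>I. sum (pmf R) (B i \<inter> E))"
    using fI fB dj by (intro sum.UNION_disjoint) (auto simp: disjoint_family_on_def)
  also have "\<dots> \<le> (\<Sum>i\<in>I. alpha * sum (pmf R) (B i))"
  proof (intro sum_mono)
    fix i assume i: "i \<in> I"
    show "sum (pmf R) (B i \<inter> E) \<le> alpha * sum (pmf R) (B i)"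
    proof (cases "B i = {}")
      case True then show ?thesis by simp
    next
      case False
      then obtain x0 where x0: "x0 \<in> B i" by blast
      have "sum (pmf R) (B i \<inter> E) = sum (\<lambda>_. pmf R x0) (B i \<inter> E)"
        using cst[OF i _ x0] by (intro sum.cong) auto
      also have "\<dots> = real (card (B i \<inter> E)) * pmf R x0" by simp
      also have "\<dots> \<le> alpha * real (card (B i)) * pmf R x0"
        using cb[OF i] by (intro mult_right_mono) auto
      also have "\<dots> = alpha * sum (\<lambda>_. pmf R x0) (B i)" by simp
      also have "sum (\<lambda>_. pmf R x0) (B i) = sum (pmf R) (B i)"
        using cst[OF i _ x0] by (intro sum.cong) auto
      finally show ?thesis .
    qed
  qed
  also have "\<dots> = alpha * sum (pmf R) U"
    unfolding U_def using fI fB dj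
    by (subst sum.UNION_disjoint) (auto simp: disjoint_family_on_def sum_distrib_left)
  also have "\<dots> = alpha * measure_pmf.prob R U" using fU by (simp add: measure_measure_pmf_finite)
  also have "\<dots> \<le> alpha * 1" using a0 by (intro mult_left_mono) auto
  finally show ?thesis by simp
qed



lemma stat_cong:
  assumes "\<forall>i\<in>s. y i = y' i" "z \<inter> s = z' \<inter> s" "stat = tRS1 phi \<or> stat = tRS2 phi"
  shows "stat s z y = stat s z' y'"
proof -
  have m: "i \<in> s \<Longrightarrow> (i \<in> z) = (i \<in> z')" for i using assms(2) by blast
  show ?thesis using assms(3)
    by (auto simp: tRS1_def tRS2_def assms(1) m intro!: sum.cong)
qed

lemma assignments_finite: "finite s \<Longrightarrow> finite (assignments s m)"
  unfolding assignments_def by (rule finite_subset[of _ "Pow s"]) auto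

lemma assignments_ne: "finite s \<Longrightarrow> m \<le> card s \<Longrightarrow> assignments s m \<noteq> {}"
  unfolding assignments_def by (metis (mono_tags, lifting) empty_iff mem_Collect_eq obtain_subset_with_card_n)

lemma card_le_inv:
  assumes "finite s" "stat = tRS1 phi \<or> stat = tRS2 phi"
  shows "card (assignments s m \<inter> {A. c \<le> stat s A y}) \<le> card (assignments s m \<inter> {A. c \<le> stat s A y'})"
proof -
  obtain h where h: "bij_betw h s s" "\<forall>i\<in>s. \<forall>j\<in>s. lek y j i \<longleftrightarrow> lek y' (h j) (h i)"
    using exists_iso[OF assms(1)] by blast
  have inj: "inj_on h s" using h(1) bij_betw_imp_inj_on by blast
  show ?thesis
  proof (rule card_inj_on_le[where f = "\<lambda>A. h ` A"])
    show "inj_on ((`) h) (assignments s m \<inter> {A. c \<le> stat s A y})"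
      unfolding inj_on_def assignments_def using inj_on_image_eq_iff[OF inj] by blast
    show "finite (assignments s m \<inter> {A. c \<le> stat s A y'})" using assignments_finite[OF assms(1)] by blast
    show "(`) h ` (assignments s m \<inter> {A. c \<le> stat s A y}) \<subseteq> assignments s m \<inter> {A. c \<le> stat s A y'}"
    proof
      fix B assume "B \<in> (`) h ` (assignments s m \<inter> {A. c \<le> stat s A y})"
      then obtain A where A: "A \<subseteq> s" "card A = m" "c \<le> stat s A y" "B = h ` A"
        unfolding assignments_def by blast
      have "h ` A \<subseteq> s" using A(1) h(1) bij_betwE by blast
      moreover have "card (h ` A) = m" using A(1,2) inj by (simp add: card_image inj_on_subset)
      moreover have "stat s A y = stat s (h ` A) y'" using stat_iso[OF assms(1) h A(1) assms(2)] .
      ultimately show "B \<in> assignments s m \<inter> {A. c \<le> stat s A y'}"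
        using A unfolding assignments_def by auto
    qed
  qed
qed

lemma G_inv:
  assumes "finite s" "m \<le> card s" "stat = tRS1 phi \<or> stat = tRS2 phi"
  shows "G stat y s m c = real (card {A\<in>assignments s m. c \<le> stat s A y'}) / real (card (assignments s m))"
proof -
  have "card (assignments s m \<inter> {A. c \<le> stat s A y}) = card (assignments s m \<inter> {A. c \<le> stat s A y'})"
    using card_le_inv[OF assms(1,3), of m c y y'] card_le_inv[OF assms(1,3), of m c y' y] by linarith
  then show ?thesis unfolding G_def
    using assignments_finite[OF assms(1)] assignments_ne[OF assms(1,2)]
    by (simp add: measure_pmf_of_set Int_def)
qed

lemma prod_if_mem:
  fixes g :: "bool \<Rightarrow> real"
  assumes "finite s" "a \<subseteq> s"
  shows "(\<Prod>i\<in>s. g (i \<in> a)) = g True ^ card a * g False ^ (card s - card a)"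
proof -
  have "(\<Prod>i\<in>s. g (i \<in> a)) = (\<Prod>i\<in>s. if i \<in> a then g True else g False)"
    by (intro prod.cong) auto
  also have "\<dots> = (\<Prod>i\<in>s \<inter> {x. x \<in> a}. g True) * (\<Prod>i\<in>s \<inter> - {x. x \<in> a}. g False)"
    using assms(1) by (rule prod.If_cases)
  also have "s \<inter> {x. x \<in> a} = a" using assms by auto
  also have "s \<inter> - {x. x \<in> a} = s - a" by auto
  finally show ?thesis using assms by (simp add: card_Diff_subset finite_subset)
qed

lemma W_eq:
  fixes g :: "bool \<Rightarrow> bool \<Rightarrow> real"
  assumes "finite N" "s \<subseteq> N" "T \<inter> s = a" "T' \<inter> s = a'" "T - s = T' - s" "card a = card a'"
  shows "(\<Prod>i\<in>N. g (i \<in> T) (i \<in> s)) = (\<Prod>i\<in>N. g (i \<in> T') (i \<in> s))"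
proof -
  have fs: "finite s" using assms finite_subset by blast
  have sp: "(\<Prod>i\<in>N. g (i \<in> X) (i \<in> s)) = (\<Prod>i\<in>N - s. g (i \<in> X - s) False) * (\<Prod>i\<in>s. g (i \<in> X \<inter> s) True)" for X
  proof -
    have "(\<Prod>i\<in>N. g (i \<in> X) (i \<in> s)) = (\<Prod>i\<in>N - s. g (i \<in> X) (i \<in> s)) * (\<Prod>i\<in>s. g (i \<in> X) (i \<in> s))"
      by (rule prod.subset_diff[OF assms(2,1), where g="\<lambda>i. g (i \<in> X) (i \<in> s)"])
    also have "(\<Prod>i\<in>N - s. g (i \<in> X) (i \<in> s)) = (\<Prod>i\<in>N - s. g (i \<in> X - s) False)"
      by (intro prod.cong) auto
    also have "(\<Prod>i\<in>s. g (i \<in> X) (i \<in> s)) = (\<Prod>i\<in>s. g (i \<in> X \<inter> s) True)"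
      by (intro prod.cong) auto
    finally show ?thesis .
  qed
  have "(\<Prod>i\<in>s. g (i \<in> a) True) = (\<Prod>i\<in>s. g (i \<in> a') True)"
    using prod_if_mem[OF fs, of a "\<lambda>b. g b True"] prod_if_mem[OF fs, of a' "\<lambda>b. g b True"] assms
    by auto
  then show ?thesis unfolding sp using assms by simp
qed

lemma swap_props:
  assumes "finite T" "finite s" "T \<inter> s = b" "b' \<subseteq> s" "card b = card b'"
  shows "card ((T - s) \<union> b') = card T" "((T - s) \<union> b') \<inter> s = b'" "((T - s) \<union> b') - s = T - s"
proof -
  have "card ((T - s) \<union> b') = card (T - s) + card b'"
    using assms by (intro card_Un_disjoint) (auto intro: finite_subset)
  moreover have "card T = card (T - s) + card b"
  proof -
    have "T = (T - s) \<union> b" using assms by auto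
    then have "card T = card ((T - s) \<union> b)" by simp
    also have "\<dots> = card (T - s) + card b" using assms by (intro card_Un_disjoint) auto
    finally show ?thesis .
  qed
  ultimately show "card ((T - s) \<union> b') = card T" using assms by simp
  show "((T - s) \<union> b') \<inter> s = b'" using assms by auto
  show "((T - s) \<union> b') - s = T - s" using assms by auto
qed



theorem theorem5:
  fixes n n1 :: nat
    and Y1 Y0 delta y0 phi :: "nat \<Rightarrow> real"
    and p :: "(bool \<times> bool) pmf"
    and stat :: "nat set \<Rightarrow> nat set \<Rightarrow> (nat \<Rightarrow> real) \<Rightarrow> real"
    and alpha :: real
  assumes "0 < n1" and "n1 < n"
    and "mono phi"
    and "stat = tRS1 phi \<or> stat = tRS2 phi"
    and "\<forall>i<n. Y1 i - Y0 i = delta i"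
    and "0 < alpha" and "alpha < 1"
  shows "measure_pmf.prob
           (pair_pmf (pmf_of_set (assignments {..<n} n1)) (Pi_pmf {..<n} (False, False) (\<lambda>_. p)))
           {(T, MM). pval stat y0 n Y1 Y0 delta T MM \<le> alpha} \<le> alpha"
proof -
  note st = assms(4)
  define AS where "AS = assignments {..<n} n1"
  define U where "U = pmf_of_set AS"
  define Q where "Q = Pi_pmf {..<n} (False, False) (\<lambda>_. p)"
  define Sf where "Sf T MM = {i. i < n \<and> obsM T MM i}" for T MM
  define Phi where "Phi = (\<lambda>(T, MM). (Sf T MM, T \<inter> Sf T MM))"
  define R where "R = map_pmf Phi (pair_pmf U Q)"
  define V where "V = (\<lambda>(s, a). G stat y0 s (card a) (stat s a Y0))"
  define E' where "E' = {x. V x \<le> alpha}"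
  define g where "g b c = measure_pmf.prob p {x. (if b then fst x else snd x) = c}" for b c
  define W where "W T s = (\<Prod>i\<in>{..<n}. g (i \<in> T) (i \<in> s))" for T s
  define I where "I = {(s, m). s \<subseteq> {..<n} \<and> m \<le> card s}"
  define B where "B = (\<lambda>(s, m). Pair s ` assignments s m)"
  have Sf_sub: "Sf T MM \<subseteq> {..<n}" for T MM unfolding Sf_def by auto
  have fAS: "finite AS" unfolding AS_def by (rule assignments_finite) simp
  have neAS: "AS \<noteq> {}" unfolding AS_def using assms(2) by (intro assignments_ne) auto
  have pv: "pval stat y0 n Y1 Y0 delta T MM = V (Phi (T, MM))" for T MM
  proof -
    let ?S = "Sf T MM"
    have "stat ?S T (\<lambda>i. obsY T Y1 Y0 i - delta i * of_bool (i \<in> T)) = stat ?S (T \<inter> ?S) Y0"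
      using Sf_sub[of T MM] assms(5) by (intro stat_cong[OF _ _ st]) (auto simp: obsY_def)
    then show ?thesis unfolding pval_def Let_def V_def Phi_def Sf_def[symmetric]
      by (simp add: Int_commute)
  qed
  have ev: "{(T, MM). pval stat y0 n Y1 Y0 delta T MM \<le> alpha} = Phi -` E'"
    unfolding E'_def using pv by auto
  have R_bind: "R = bind_pmf U (\<lambda>T. map_pmf (\<lambda>MM. Phi (T, MM)) Q)"
    unfolding R_def by (simp add: pair_pmf_def map_pmf_def bind_assoc_pmf bind_return_pmf)
  have pmfR: "pmf R (s, a) = (\<Sum>T\<in>{T\<in>AS. T \<inter> s = a}. W T s) / real (card AS)"
    if "a \<subseteq> s" "s \<subseteq> {..<n}" for s a
  proof -
    have each: "measure_pmf.prob Q ((\<lambda>MM. Phi (T, MM)) -` {(s, a)}) = (if T \<inter> s = a then W T s else 0)" for T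
    proof (cases "T \<inter> s = a")
      case False
      then have "(\<lambda>MM. Phi (T, MM)) -` {(s, a)} = {}" unfolding Phi_def by auto
      then show ?thesis using False by simp
    next
      case True
      have "(\<lambda>MM. Phi (T, MM)) -` {(s, a)} = Pi {..<n} (\<lambda>i. {x. (if i \<in> T then fst x else snd x) = (i \<in> s)})"
      proof (intro set_eqI iffI)
        fix MM assume "MM \<in> (\<lambda>MM. Phi (T, MM)) -` {(s, a)}"
        then have "Sf T MM = s" unfolding Phi_def by auto
        then show "MM \<in> Pi {..<n} (\<lambda>i. {x. (if i \<in> T then fst x else snd x) = (i \<in> s)})"
          unfolding Sf_def obsM_def by auto
      next
        fix MM assume a: "MM \<in> Pi {..<n} (\<lambda>i. {x. (if i \<in> T then fst x else snd x) = (i \<in> s)})"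
        have "Sf T MM = s"
        proof (intro set_eqI iffI)
          fix i assume "i \<in> Sf T MM" then show "i \<in> s" using a unfolding Sf_def obsM_def by auto
        next
          fix i assume "i \<in> s" then have "i < n" using that by auto
          then show "i \<in> Sf T MM" using a \<open>i \<in> s\<close> unfolding Sf_def obsM_def by (auto simp: Pi_def)
        qed
        then show "MM \<in> (\<lambda>MM. Phi (T, MM)) -` {(s, a)}" using True unfolding Phi_def by auto
      qed
      then have "measure_pmf.prob Q ((\<lambda>MM. Phi (T, MM)) -` {(s, a)}) = W T s"
        unfolding Q_def W_def g_def by (simp add: measure_Pi_pmf_Pi)
      then show ?thesis using True by simp
    qed
    have "pmf R (s, a) = (\<Sum>T\<in>AS. measure_pmf.prob Q ((\<lambda>MM. Phi (T, MM)) -` {(s, a)})) / real (card AS)"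
      unfolding R_bind pmf_bind U_def pmf_map using integral_pmf_of_set[OF neAS fAS] by simp
    also have "\<dots> = (\<Sum>T\<in>AS. if T \<inter> s = a then W T s else 0) / real (card AS)"
      by (simp add: each)
    also have "\<dots> = (\<Sum>T\<in>{T\<in>AS. T \<inter> s = a}. W T s) / real (card AS)"
      using fAS by (simp add: sum.inter_filter)
    finally show ?thesis .
  qed
  have cst: "pmf R x = pmf R y" if i: "i \<in> I" and x: "x \<in> B i" and y: "y \<in> B i" for i x y
  proof -
    obtain s m where im: "i = (s, m)" by force
    have s: "s \<subseteq> {..<n}" "m \<le> card s" using i im unfolding I_def by auto
    have fs: "finite s" using s finite_subset by blast
    obtain a a' where xa: "x = (s, a)" "a \<subseteq> s" "card a = m" and ya: "y = (s, a')" "a' \<subseteq> s" "card a' = m"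
      using x y im unfolding B_def assignments_def by auto
    have "(\<Sum>T\<in>{T\<in>AS. T \<inter> s = a}. W T s) = (\<Sum>T\<in>{T\<in>AS. T \<inter> s = a'}. W T s)"
    proof (rule sum.reindex_bij_witness[where i = "\<lambda>T. (T - s) \<union> a" and j = "\<lambda>T. (T - s) \<union> a'"])
      fix T assume T: "T \<in> {T\<in>AS. T \<inter> s = a}"
      then have fT: "finite T" using fAS AS_def assignments_def finite_subset by fastforce
      note sw = swap_props[OF fT fs _ ya(2), of a] 
      show "(T - s \<union> a') - s \<union> a = T" using T xa(2) ya(2) by auto
      show "T - s \<union> a' \<in> {T\<in>AS. T \<inter> s = a'}"
        using T sw xa ya s unfolding AS_def assignments_def by auto
      have Ta: "T \<inter> s = a" using T by simp
      show "W (T - s \<union> a') s = W T s" unfolding W_def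
        by (rule W_eq[where T="T - s \<union> a'" and a=a' and T'=T and a'=a]) (use Ta sw xa ya s in auto)
    next
      fix T assume T: "T \<in> {T\<in>AS. T \<inter> s = a'}"
      then have fT: "finite T" using fAS AS_def assignments_def finite_subset by fastforce
      note sw = swap_props[OF fT fs _ xa(2), of a'] 
      show "(T - s \<union> a) - s \<union> a' = T" using T xa(2) ya(2) by auto
      show "T - s \<union> a \<in> {T\<in>AS. T \<inter> s = a}"
        using T sw xa ya s unfolding AS_def assignments_def by auto
    qed
    then show ?thesis using xa ya pmfR s by simp
  qed
  have cb: "real (card (B i \<inter> E')) \<le> alpha * real (card (B i))" if i: "i \<in> I" for i
  proof -
    obtain s m where im: "i = (s, m)" by force
    have s: "s \<subseteq> {..<n}" "m \<le> card s" using i im unfolding I_def by auto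
    have fs: "finite s" using s finite_subset by blast
    define X where "X = assignments s m"
    have fX: "finite X" "X \<noteq> {}" unfolding X_def using assignments_finite[OF fs] assignments_ne[OF fs s(2)] by auto
    have Bi: "B i \<inter> E' = Pair s ` {a\<in>X. real (card {b\<in>X. stat s a Y0 \<le> stat s b Y0}) / real (card X) \<le> alpha}"
    proof -
      have "V (s, a) = real (card {b\<in>X. stat s a Y0 \<le> stat s b Y0}) / real (card X)" if "a \<in> X" for a
        using that G_inv[OF fs s(2) st, of y0 "stat s a Y0" Y0] unfolding V_def X_def assignments_def by auto
      then show ?thesis unfolding B_def im E'_def X_def by auto
    qed
    have "card (B i \<inter> E') = card {a\<in>X. real (card {b\<in>X. stat s a Y0 \<le> stat s b Y0}) / real (card X) \<le> alpha}"
      unfolding Bi by (intro card_image) (simp add: inj_on_def)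
    moreover have "card (B i) = card X" unfolding B_def im X_def by (simp add: card_image inj_on_def)
    ultimately show ?thesis using count_bound[OF fX, of alpha "\<lambda>a. stat s a Y0"] assms(6) by simp
  qed
  have fI: "finite I"
  proof (rule finite_subset[of _ "Pow {..<n} \<times> {..n}"])
    show "I \<subseteq> Pow {..<n} \<times> {..n}" unfolding I_def
    proof (clarsimp)
      fix s m assume "s \<subseteq> {..<n}" "m \<le> card s"
      then show "m \<le> n" using card_mono[of "{..<n}" s] by simp
    qed
  qed simp
  have fB: "finite (B i)" if "i \<in> I" for i
    using that unfolding I_def B_def
    by (auto intro!: finite_imageI assignments_finite dest: finite_subset[OF _ finite_lessThan])
  have dj: "disjoint_family_on B I"
    unfolding disjoint_family_on_def B_def assignments_def by auto
  have sp: "set_pmf R \<subseteq> (\<Union>i\<in>I. B i)"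
  proof
    fix x assume "x \<in> set_pmf R"
    then obtain T MM where x: "x = Phi (T, MM)" unfolding R_def by auto
    have "card (T \<inter> Sf T MM) \<le> card (Sf T MM)"
      using Sf_sub[of T MM] by (intro card_mono) (auto intro: finite_subset)
    then have "(Sf T MM, card (T \<inter> Sf T MM)) \<in> I" using Sf_sub unfolding I_def by auto
    moreover have "x \<in> B (Sf T MM, card (T \<inter> Sf T MM))"
      unfolding x Phi_def B_def assignments_def by auto
    ultimately show "x \<in> (\<Union>i\<in>I. B i)" by blast
  qed
  have "measure_pmf.prob R E' \<le> alpha"
    using block_bound[OF fI fB dj sp cst cb] assms(6) by simp
  then show ?thesis unfolding ev U_def[symmetric] Q_def[symmetric] AS_def[symmetric] R_def by simp
qed

end
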